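(* Let $\{X_n,n\geq1\}$ be a $\varphi$-mixing sequence of random variables with common marginal distribution function $F$, whose mixing coefficients satisfy $\sum_{n=1}^\infty\varphi^{1/2}(n)<\infty$. Fix $p\in(0,1)$, let $\xi_p=\inf\{x:F(x)\geq p\}$ and $\xi_{p,n}=\inf\{x:F_n(x)\geq p\}$. Assume that $F$ possesses a positive continuous density $f$ in a neighborhood $\mathscr{N}_p$ of $\xi_p$ such that $0<\sup\{f(x):x\in\mathscr{N}_p\}<\infty$, and that $f'$ exists and is bounded in some neighborhood of $\xi_p$. Then with probability 1, $$\xi_{p,n}=\xi_p-\frac{F_n(\xi_p)-p}{f(\xi_p)}+O\left(\frac{(\log n)^{1/2}}{n^{1/2}}\right),\quad n\to\infty.$$
   Context: All random variables are defined on a probability space $(\Omega,\mathcal{F},P)$. $F_n(x)=\frac1n\sum_{i=1}^n I(X_i\leq x)$ is the empirical distribution function of $X_1,\dots,X_n$. For $n\leq m$ let $\mathcal{F}_n^m=\sigma(X_i,n\leq i\leq m)$. For sub-$\sigma$-algebras $\mathcal{B},\mathcal{R}$ let $\varphi(\mathcal{B},\mathcal{R})=\sup_{A\in\mathcal{B},B\in\mathcal{R},P(A)>0}|P(B\mid A)-P(B)|$, and the mixing coefficients are $\varphi(n)=\sup_{k\geq1}\varphi(\mathcal{F}_1^k,\mathcal{F}_{k+n}^\infty)$. The sequence is called $\varphi$-mixing if $\varphi(n)\downarrow0$ as $n\to\infty$. *)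

theory Defs
  imports "HOL-Probability.Probability" "HOL-Library.Landau_Symbols"
begin

definition gen_sigma :: "'a measure \<Rightarrow> (nat \<Rightarrow> 'a \<Rightarrow> real) \<Rightarrow> nat set \<Rightarrow> 'a set set" where
  "gen_sigma M X I = sigma_sets (space M) (\<Union>i\<in>I. {X i -` B \<inter> space M | B. B \<in> sets borel})"

definition phi_coef :: "'a measure \<Rightarrow> 'a set set \<Rightarrow> 'a set set \<Rightarrow> real" where
  "phi_coef M \<A> \<B> = (SUP AB \<in> {(A, B). A \<in> \<A> \<and> B \<in> \<B> \<and> measure M A > 0}.
      \<bar>measure M (fst AB \<inter> snd AB) / measure M (fst AB) - measure M (snd AB)\<bar>)"

definition mixing_phi :: "'a measure \<Rightarrow> (nat \<Rightarrow> 'a \<Rightarrow> real) \<Rightarrow> nat \<Rightarrow> real" where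
  "mixing_phi M X n = (SUP k \<in> {1..}. phi_coef M (gen_sigma M X {1..k}) (gen_sigma M X {k+n..}))"

definition emp_df :: "(nat \<Rightarrow> 'a \<Rightarrow> real) \<Rightarrow> nat \<Rightarrow> 'a \<Rightarrow> real \<Rightarrow> real" where
  "emp_df X n \<omega> x = (\<Sum>i=1..n. if X i \<omega> \<le> x then 1 else 0) / real n"

end

theory Submission
  imports Defs "HOL-Real_Asymp.Real_Asymp"
begin

locale mix = prob_space M for M :: "'a measure" +
  fixes X :: "nat \<Rightarrow> 'a \<Rightarrow> real"
  assumes rv: "\<And>i. i \<ge> 1 \<Longrightarrow> X i \<in> borel_measurable M"
  and phidec: "decseq (\<lambda>n. mixing_phi M X n)"
  and philim: "(\<lambda>n. mixing_phi M X n) \<longlonglongrightarrow> 0"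
  and phisum: "summable (\<lambda>n. sqrt (mixing_phi M X (Suc n)))"
begin

abbreviation "\<phi> \<equiv> mixing_phi M X"
abbreviation "G \<equiv> gen_sigma M X"

lemma phi_nonneg: "\<phi> n \<ge> 0"
  using decseq_ge[OF phidec philim] by simp

lemma gens_sub: "I \<subseteq> {1..} \<Longrightarrow> (\<Union>i\<in>I. {X i -` B \<inter> space M | B. B \<in> sets borel}) \<subseteq> sets M"
  using rv by (auto simp: measurable_sets)

lemma G_sub: "I \<subseteq> {1..} \<Longrightarrow> G I \<subseteq> sets M"
  unfolding gen_sigma_def using gens_sub by (simp add: sets.sigma_sets_subset)

lemma G_mono: "I \<subseteq> J \<Longrightarrow> G I \<subseteq> G J"
  unfolding gen_sigma_def by (rule sigma_sets_mono') blast

lemma G_top: "space M \<in> G I"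
  unfolding gen_sigma_def by (rule sigma_sets_top)

lemma G_pre: "i \<in> I \<Longrightarrow> B \<in> sets borel \<Longrightarrow> X i -` B \<inter> space M \<in> G I"
  unfolding gen_sigma_def by (rule sigma_sets.Basic) blast

lemma ratio_bound: assumes "A \<in> sets M" "B \<in> sets M" "prob A > 0"
  shows "\<bar>prob (A \<inter> B) / prob A - prob B\<bar> \<le> 1"
proof -
  have "prob (A \<inter> B) \<le> prob A" using assms by (intro finite_measure_mono) auto
  hence "0 \<le> prob (A \<inter> B) / prob A" "prob (A \<inter> B) / prob A \<le> 1" using assms(3) by auto
  moreover have "0 \<le> prob B" "prob B \<le> 1" by auto
  ultimately show ?thesis by linarith
qed

lemma phi_coef_bdd: assumes "\<A> \<subseteq> sets M" "\<B> \<subseteq> sets M"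
  shows "bdd_above ((\<lambda>AB. \<bar>prob (fst AB \<inter> snd AB) / prob (fst AB) - prob (snd AB)\<bar>) `
     {(A, B). A \<in> \<A> \<and> B \<in> \<B> \<and> prob A > 0})"
  using assms by (intro bdd_aboveI[where M=1]) (auto intro!: ratio_bound)

lemma phi_coef_le1: assumes "\<A> \<subseteq> sets M" "\<B> \<subseteq> sets M" "space M \<in> \<A>" "space M \<in> \<B>"
  shows "phi_coef M \<A> \<B> \<le> 1"
  unfolding phi_coef_def
proof (rule cSUP_least)
  show "{(A, B). A \<in> \<A> \<and> B \<in> \<B> \<and> prob A > 0} \<noteq> {}" using assms prob_space by auto
  fix AB assume "AB \<in> {(A, B). A \<in> \<A> \<and> B \<in> \<B> \<and> prob A > 0}"
  thus "\<bar>prob (fst AB \<inter> snd AB) / prob (fst AB) - prob (snd AB)\<bar> \<le> 1"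
    using assms by (auto intro!: ratio_bound)
qed

lemma ev_ineq: assumes k: "k \<ge> 1" and A: "A \<in> G {1..k}" and B: "B \<in> G {k+g..}"
  shows "prob (A \<inter> B) \<le> prob A * (prob B + \<phi> g)"
proof -
  have s1: "G {1..k} \<subseteq> sets M" by (rule G_sub) auto
  have s2: "G {k+g..} \<subseteq> sets M" by (rule G_sub) (use k in auto)
  have AM: "A \<in> sets M" and BM: "B \<in> sets M" using A B s1 s2 by auto
  show ?thesis
  proof (cases "prob A = 0")
    case True
    have "prob (A \<inter> B) \<le> prob A" using AM BM by (intro finite_measure_mono) auto
    with True show ?thesis by simp
  next
    case False
    hence pA: "prob A > 0" using measure_nonneg[of M A] by linarith
    have "\<bar>prob (A \<inter> B) / prob A - prob B\<bar> \<le> phi_coef M (G {1..k}) (G {k+g..})"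
      unfolding phi_coef_def
      by (rule cSUP_upper2[where x="(A,B)"], rule phi_coef_bdd[OF s1 s2]) (use A B pA in auto)
    also have "\<dots> \<le> \<phi> g"
    proof -
      have bdd: "bdd_above ((\<lambda>k. phi_coef M (G {1..k}) (G {k + g..})) ` {1..})"
      proof (rule bdd_aboveI2[where M=1])
        fix j :: nat assume "j \<in> {1..}"
        show "phi_coef M (G {1..j}) (G {j + g..}) \<le> 1"
        proof (rule phi_coef_le1)
          show "G {1..j} \<subseteq> events" by (rule G_sub) auto
          show "G {j+g..} \<subseteq> events" by (rule G_sub) (use \<open>j \<in> {1..}\<close> in auto)
        qed (rule G_top)+
      qed
      show ?thesis unfolding mixing_phi_def
        by (rule cSUP_upper2[OF bdd, where x=k]) (use k in auto)
    qed
    finally have "prob (A \<inter> B) / prob A \<le> prob B + \<phi> g" by linarith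
    thus ?thesis using pA by (simp add: divide_le_eq mult.commute)
  qed
qed

lemma G_sets: "sets (sigma (space M) (G I)) = G I"
proof -
  have gp: "(\<Union>i\<in>I. {X i -` B \<inter> space M | B. B \<in> sets borel}) \<subseteq> Pow (space M)" by auto
  have "G I \<subseteq> Pow (space M)" unfolding gen_sigma_def using sigma_sets_into_sp[OF gp] by blast
  hence "sets (sigma (space M) (G I)) = sigma_sets (space M) (G I)" by (rule sets_measure_of)
  also have "\<dots> = G I" unfolding gen_sigma_def by (rule sigma_sets_sigma_sets_eq[OF gp])
  finally show ?thesis .
qed

definition lc :: "(nat \<Rightarrow> real) \<Rightarrow> nat \<Rightarrow> real" where
  "lc h r = (if r = 0 then h 0 else h r - h (r - 1))"

lemma lc_nonneg: "mono h \<Longrightarrow> h 0 \<ge> 0 \<Longrightarrow> lc h r \<ge> 0"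
  using monoD[of h "r - 1" r] by (auto simp: lc_def)

lemma lc_sum: "(\<Sum>r\<le>c. lc h r) = h c"
  by (induction c) (auto simp: lc_def)

lemma layer: assumes "c \<le> n" shows "h c = (\<Sum>r\<le>n. lc h r * (if r \<le> c then 1 else 0))"
proof -
  have "(\<Sum>r\<le>n. lc h r * (if r \<le> c then 1 else 0)) = (\<Sum>r\<le>n. if r \<le> c then lc h r else 0)"
    by (intro sum.cong) auto
  also have "\<dots> = (\<Sum>r\<in>{..n} \<inter> {r. r \<le> c}. lc h r)"
    by (simp add: sum.inter_restrict)
  also have "{..n} \<inter> {r. r \<le> c} = {..c}" using assms by auto
  finally show ?thesis by (simp add: lc_sum)
qed

end

locale mixE = mix +
  fixes E :: "nat \<Rightarrow> 'a set" and q :: real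
  assumes EG: "\<And>i. i \<ge> 1 \<Longrightarrow> E i \<in> G {i}"
  and Eq: "\<And>i. i \<ge> 1 \<Longrightarrow> prob (E i) = q"
begin

lemma E_sets: "i \<ge> 1 \<Longrightarrow> E i \<in> sets M"
  using EG G_sub[of "{i}"] by auto

lemma q_bounds: "0 \<le> q" "q \<le> 1"
  using Eq[of 1] by auto

definition cnt :: "nat set \<Rightarrow> 'a \<Rightarrow> nat" where
  "cnt J \<omega> = card {i\<in>J. \<omega> \<in> E i}"

lemma cnt_real: "finite J \<Longrightarrow> real (cnt J \<omega>) = (\<Sum>i\<in>J. indicator (E i) \<omega>)"
proof -
  assume J: "finite J"
  have "real (card {i\<in>J. \<omega> \<in> E i}) = (\<Sum>i\<in>{i\<in>J. \<omega> \<in> E i}. 1)" by simp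
  also have "\<dots> = (\<Sum>i\<in>J. if \<omega> \<in> E i then 1 else 0)" by (rule sum.inter_filter[OF J])
  finally have c: "real (card {i\<in>J. \<omega> \<in> E i}) = (\<Sum>i\<in>J. if \<omega> \<in> E i then 1 else 0)" .
  have "(\<Sum>i\<in>J. indicator (E i) \<omega> :: real) = (\<Sum>i\<in>J. if \<omega> \<in> E i then 1 else 0)"
    by (intro sum.cong) (auto simp: indicator_def)
  with c show ?thesis unfolding cnt_def by linarith
qed

lemma cnt_le: "finite J \<Longrightarrow> cnt J \<omega> \<le> card J"
  unfolding cnt_def by (rule card_mono) auto

lemma cnt_union: "finite J \<Longrightarrow> finite K \<Longrightarrow> J \<inter> K = {} \<Longrightarrow> cnt (J \<union> K) \<omega> = cnt J \<omega> + cnt K \<omega>"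
  unfolding cnt_def by (subst card_Un_disjoint[symmetric]) (auto intro!: arg_cong[where f=card])

lemma cnt_meas: assumes "finite J" "J \<subseteq> I" "I \<subseteq> {1..}"
  shows "(\<lambda>\<omega>. real (cnt J \<omega>)) \<in> borel_measurable (sigma (space M) (G I))"
proof -
  have "(\<lambda>\<omega>. \<Sum>i\<in>J. indicator (E i) \<omega> :: real) \<in> borel_measurable (sigma (space M) (G I))"
  proof (intro borel_measurable_sum borel_measurable_indicator)
    fix i assume "i \<in> J"
    hence "E i \<in> G {i}" "G {i} \<subseteq> G I" using assms EG by (auto intro!: G_mono)
    thus "E i \<in> sets (sigma (space M) (G I))" by (auto simp: G_sets)
  qed
  thus ?thesis using cnt_real[OF assms(1)] by simp
qed

lemma cnt_ge_G: assumes "finite J" "J \<subseteq> I" "I \<subseteq> {1..}"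
  shows "{\<omega>\<in>space M. r \<le> cnt J \<omega>} \<in> G I"
proof -
  let ?N = "sigma (space M) (G I)"
  have "(\<lambda>\<omega>. real (cnt J \<omega>)) -` {real r..} \<inter> space ?N \<in> sets ?N"
    by (rule measurable_sets[OF cnt_meas[OF assms]]) auto
  moreover have "(\<lambda>\<omega>. real (cnt J \<omega>)) -` {real r..} \<inter> space ?N = {\<omega>\<in>space M. r \<le> cnt J \<omega>}" by (auto simp: space_measure_of_conv)
  ultimately show ?thesis by (simp add: G_sets)
qed

lemma cnt_ge_sets: assumes "finite J" "J \<subseteq> {1..}"
  shows "{\<omega>\<in>space M. r \<le> cnt J \<omega>} \<in> sets M"
  using cnt_ge_G[OF assms(1) order.refl assms(2)] G_sub[OF assms(2)] by auto

lemma integrable_ind: "A \<in> sets M \<Longrightarrow> integrable M (\<lambda>\<omega>. c * indicator A \<omega> :: real)"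
  by (intro integrable_mult_right) (simp add: integrable_indicator_iff less_top[symmetric] emeasure_finite)

lemma integral_c_ind: "A \<in> sets M \<Longrightarrow> (\<integral>\<omega>. c * indicator A \<omega> \<partial>M) = c * prob A"
  using sets.sets_into_space[of A M] by (simp add: Int_absorb2)

lemma integral_layer:
  assumes fin: "finite J" "J \<subseteq> {1..}"
  shows "(\<integral>\<omega>. h (cnt J \<omega>) \<partial>M) = (\<Sum>r\<le>card J. lc h r * prob {\<omega>\<in>space M. r \<le> cnt J \<omega>})"
proof -
  let ?A = "\<lambda>r. {\<omega>\<in>space M. r \<le> cnt J \<omega>}"
  have "(\<integral>\<omega>. h (cnt J \<omega>) \<partial>M) = (\<integral>\<omega>. (\<Sum>r\<le>card J. lc h r * indicator (?A r) \<omega>) \<partial>M)"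
  proof (rule Bochner_Integration.integral_cong[OF refl])
    fix \<omega> assume "\<omega> \<in> space M"
    have "h (cnt J \<omega>) = (\<Sum>r\<le>card J. lc h r * (if r \<le> cnt J \<omega> then 1 else 0))"
      by (rule layer[OF cnt_le[OF fin(1)]])
    also have "\<dots> = (\<Sum>r\<le>card J. lc h r * indicator (?A r) \<omega>)"
      using \<open>\<omega> \<in> space M\<close> by (intro sum.cong refl) (auto simp: indicator_def)
    finally show "h (cnt J \<omega>) = (\<Sum>r\<le>card J. lc h r * indicator (?A r) \<omega>)" .
  qed
  also have "\<dots> = (\<Sum>r\<le>card J. (\<integral>\<omega>. lc h r * indicator (?A r) \<omega> \<partial>M))"
    by (rule Bochner_Integration.integral_sum) (intro integrable_ind cnt_ge_sets[OF fin])
  also have "\<dots> = (\<Sum>r\<le>card J. lc h r * prob (?A r))"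
    by (intro sum.cong refl integral_c_ind cnt_ge_sets[OF fin])
  finally show ?thesis .
qed

lemma dec:
  assumes fin: "finite J1" "finite J2" and J1: "J1 \<subseteq> {1..a}" and a: "a \<ge> 1"
    and J2: "J2 \<subseteq> {a+g..}" and h1: "mono h1" "h1 0 \<ge> 0" and h2: "mono h2" "h2 0 \<ge> 0"
  shows "(\<integral>\<omega>. h1 (cnt J1 \<omega>) * h2 (cnt J2 \<omega>) \<partial>M)
     \<le> (\<integral>\<omega>. h1 (cnt J1 \<omega>) \<partial>M) * ((\<integral>\<omega>. h2 (cnt J2 \<omega>) \<partial>M) + \<phi> g * h2 (card J2))"
proof -
  let ?A = "\<lambda>r. {\<omega>\<in>space M. r \<le> cnt J1 \<omega>}"
  let ?B = "\<lambda>s. {\<omega>\<in>space M. s \<le> cnt J2 \<omega>}"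
  let ?n1 = "card J1" and ?n2 = "card J2"
  have J1': "J1 \<subseteq> {1..}" using J1 by auto
  have J2': "J2 \<subseteq> {1..}" using J2 a by auto
  have AG: "?A r \<in> G {1..a}" for r by (rule cnt_ge_G[OF fin(1) J1]) auto
  have BG: "?B s \<in> G {a+g..}" for s by (rule cnt_ge_G[OF fin(2) J2]) (use a in auto)
  have AM: "?A r \<in> sets M" for r by (rule cnt_ge_sets[OF fin(1) J1'])
  have BM: "?B s \<in> sets M" for s by (rule cnt_ge_sets[OF fin(2) J2'])
  have "(\<integral>\<omega>. h1 (cnt J1 \<omega>) * h2 (cnt J2 \<omega>) \<partial>M)
     = (\<integral>\<omega>. (\<Sum>r\<le>?n1. \<Sum>s\<le>?n2. (lc h1 r * lc h2 s) * indicator (?A r \<inter> ?B s) \<omega>) \<partial>M)"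
  proof (rule Bochner_Integration.integral_cong[OF refl])
    fix \<omega> assume w: "\<omega> \<in> space M"
    have "h1 (cnt J1 \<omega>) * h2 (cnt J2 \<omega>) =
      (\<Sum>r\<le>?n1. lc h1 r * (if r \<le> cnt J1 \<omega> then 1 else 0)) * (\<Sum>s\<le>?n2. lc h2 s * (if s \<le> cnt J2 \<omega> then 1 else 0))"
      by (subst layer[OF cnt_le[OF fin(1)]], subst layer[OF cnt_le[OF fin(2)]]) (rule refl)
    also have "\<dots> = (\<Sum>r\<le>?n1. \<Sum>s\<le>?n2. (lc h1 r * (if r \<le> cnt J1 \<omega> then 1 else 0)) * (lc h2 s * (if s \<le> cnt J2 \<omega> then 1 else 0)))"
      by (rule sum_product)
    also have "\<dots> = (\<Sum>r\<le>?n1. \<Sum>s\<le>?n2. (lc h1 r * lc h2 s) * indicator (?A r \<inter> ?B s) \<omega>)"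
      using w by (intro sum.cong refl) (auto simp: indicator_def)
    finally show "h1 (cnt J1 \<omega>) * h2 (cnt J2 \<omega>) = (\<Sum>r\<le>?n1. \<Sum>s\<le>?n2. (lc h1 r * lc h2 s) * indicator (?A r \<inter> ?B s) \<omega>)" .
  qed
  also have "\<dots> = (\<Sum>r\<le>?n1. \<integral>\<omega>. (\<Sum>s\<le>?n2. (lc h1 r * lc h2 s) * indicator (?A r \<inter> ?B s) \<omega>) \<partial>M)"
    by (rule Bochner_Integration.integral_sum) (intro Bochner_Integration.integrable_sum integrable_ind sets.Int AM BM)
  also have "\<dots> = (\<Sum>r\<le>?n1. \<Sum>s\<le>?n2. (lc h1 r * lc h2 s) * prob (?A r \<inter> ?B s))"
  proof (intro sum.cong refl)
    fix r
    have "(\<integral>\<omega>. (\<Sum>s\<le>?n2. (lc h1 r * lc h2 s) * indicator (?A r \<inter> ?B s) \<omega>) \<partial>M)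
       = (\<Sum>s\<le>?n2. \<integral>\<omega>. (lc h1 r * lc h2 s) * indicator (?A r \<inter> ?B s) \<omega> \<partial>M)"
      by (rule Bochner_Integration.integral_sum) (intro integrable_ind sets.Int AM BM)
    also have "\<dots> = (\<Sum>s\<le>?n2. (lc h1 r * lc h2 s) * prob (?A r \<inter> ?B s))"
      by (intro sum.cong refl integral_c_ind sets.Int AM BM)
    finally show "(\<integral>\<omega>. (\<Sum>s\<le>?n2. (lc h1 r * lc h2 s) * indicator (?A r \<inter> ?B s) \<omega>) \<partial>M)
       = (\<Sum>s\<le>?n2. (lc h1 r * lc h2 s) * prob (?A r \<inter> ?B s))" .
  qed
  also have "\<dots> \<le> (\<Sum>r\<le>?n1. \<Sum>s\<le>?n2. (lc h1 r * lc h2 s) * (prob (?A r) * (prob (?B s) + \<phi> g)))"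
  proof (intro sum_mono mult_left_mono)
    fix r s
    show "prob (?A r \<inter> ?B s) \<le> prob (?A r) * (prob (?B s) + \<phi> g)"
      by (rule ev_ineq[OF a AG BG])
    show "0 \<le> lc h1 r * lc h2 s" using lc_nonneg h1 h2 by auto
  qed
  also have "\<dots> = (\<Sum>r\<le>?n1. lc h1 r * prob (?A r)) * ((\<Sum>s\<le>?n2. lc h2 s * prob (?B s)) + \<phi> g * (\<Sum>s\<le>?n2. lc h2 s))"
  proof -
    have "(\<Sum>r\<le>?n1. \<Sum>s\<le>?n2. (lc h1 r * lc h2 s) * (prob (?A r) * (prob (?B s) + \<phi> g)))
       = (\<Sum>r\<le>?n1. (lc h1 r * prob (?A r)) * (\<Sum>s\<le>?n2. lc h2 s * (prob (?B s) + \<phi> g)))"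
      by (intro sum.cong refl) (simp add: sum_distrib_left mult_ac)
    also have "\<dots> = (\<Sum>r\<le>?n1. lc h1 r * prob (?A r)) * (\<Sum>s\<le>?n2. lc h2 s * (prob (?B s) + \<phi> g))"
      by (simp add: sum_distrib_right)
    also have "(\<Sum>s\<le>?n2. lc h2 s * (prob (?B s) + \<phi> g)) = (\<Sum>s\<le>?n2. lc h2 s * prob (?B s)) + \<phi> g * (\<Sum>s\<le>?n2. lc h2 s)"
      by (simp add: distrib_left sum.distrib sum_distrib_left mult_ac)
    finally show ?thesis .
  qed
  also have "\<dots> = (\<integral>\<omega>. h1 (cnt J1 \<omega>) \<partial>M) * ((\<integral>\<omega>. h2 (cnt J2 \<omega>) \<partial>M) + \<phi> g * h2 (card J2))"
    by (simp add: integral_layer[OF fin(1) J1'] integral_layer[OF fin(2) J2'] lc_sum)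
  finally show ?thesis .
qed

lemma ind_meas: "i \<ge> 1 \<Longrightarrow> (\<lambda>\<omega>. indicator (E i) \<omega> :: real) \<in> borel_measurable M"
  using E_sets by simp

lemma cnt_measM: "finite J \<Longrightarrow> J \<subseteq> {1..} \<Longrightarrow> (\<lambda>\<omega>. real (cnt J \<omega>)) \<in> borel_measurable M"
  by (subst cnt_real) (auto intro!: borel_measurable_sum ind_meas)

definition T :: "nat set \<Rightarrow> 'a \<Rightarrow> real" where
  "T J \<omega> = real (cnt J \<omega>) - q * real (card J)"

lemma T_measM: "finite J \<Longrightarrow> J \<subseteq> {1..} \<Longrightarrow> T J \<in> borel_measurable M"
  unfolding T_def by (intro borel_measurable_diff cnt_measM) auto

lemma T_bounds: "finite J \<Longrightarrow> T J \<omega> \<le> real (card J)" "finite J \<Longrightarrow> - real (card J) \<le> T J \<omega>"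
proof -
  assume J: "finite J"
  have c: "real (cnt J \<omega>) \<le> real (card J)" using cnt_le[OF J] by simp
  have "q * real (card J) \<le> real (card J)" "0 \<le> q * real (card J)" using q_bounds by (auto simp: mult_left_le_one_le)
  thus "T J \<omega> \<le> real (card J)" "- real (card J) \<le> T J \<omega>" using c unfolding T_def by auto
qed

lemma T_abs: "finite J \<Longrightarrow> \<bar>T J \<omega>\<bar> \<le> real (card J)"
  using T_bounds[of J \<omega>] by auto

lemma T_sum: "finite J \<Longrightarrow> T J \<omega> = (\<Sum>i\<in>J. indicator (E i) \<omega> - q)"
  unfolding T_def by (simp add: cnt_real sum_subtractf)

lemma integrable_bdd: "f \<in> borel_measurable M \<Longrightarrow> (\<And>\<omega>. \<bar>f \<omega>\<bar> \<le> B) \<Longrightarrow> integrable M (f :: 'a \<Rightarrow> real)"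
  by (rule integrable_const_bound[where B=B]) auto

lemma integral_T: assumes "finite J" "J \<subseteq> {1..}" shows "(\<integral>\<omega>. T J \<omega> \<partial>M) = 0"
proof -
  have "(\<integral>\<omega>. T J \<omega> \<partial>M) = (\<Sum>i\<in>J. \<integral>\<omega>. (indicator (E i) \<omega> - q) \<partial>M)"
    unfolding T_sum[OF assms(1)]
    by (rule Bochner_Integration.integral_sum) (use assms E_sets in \<open>auto simp: integrable_indicator_iff less_top[symmetric] emeasure_finite\<close>)
  also have "\<dots> = (\<Sum>i\<in>J. prob (E i) - q)"
    by (intro sum.cong refl, subst Bochner_Integration.integral_diff) (use assms E_sets in \<open>auto simp: integrable_indicator_iff less_top[symmetric] emeasure_finite sets.Int_space_eq2 prob_space\<close>)
  also have "\<dots> = 0"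
  proof -
    have "\<forall>i\<in>J. prob (E i) - q = 0" using assms(2) Eq by auto
    thus ?thesis by simp
  qed
  finally show ?thesis .
qed


end

context mix begin

lemma phi_summable: "summable (\<lambda>k. \<phi> (Suc k))"
proof -
  have "(\<lambda>n. sqrt (\<phi> (Suc n))) \<longlonglongrightarrow> 0" using summable_LIMSEQ_zero[OF phisum] .
  then obtain N where N: "\<And>n. n \<ge> N \<Longrightarrow> sqrt (\<phi> (Suc n)) < 1"
    using LIMSEQ_D[of _ 0 1] by fastforce
  show ?thesis
  proof (rule summable_comparison_test'[OF phisum])
    fix n assume "n \<ge> N"
    hence s: "sqrt (\<phi> (Suc n)) \<le> 1" using N[of n] by simp
    have "\<phi> (Suc n) = sqrt (\<phi> (Suc n)) * sqrt (\<phi> (Suc n))" using phi_nonneg by simp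
    also have "\<dots> \<le> 1 * sqrt (\<phi> (Suc n))" by (rule mult_right_mono[OF s]) (simp add: phi_nonneg)
    also have "\<dots> = sqrt (\<phi> (Suc n))" by simp
    finally have "\<phi> (Suc n) \<le> sqrt (\<phi> (Suc n))" .
    moreover have "norm (\<phi> (Suc n)) = \<phi> (Suc n)" using phi_nonneg[of "Suc n"] by simp
    ultimately show "norm (\<phi> (Suc n)) \<le> sqrt (\<phi> (Suc n))" by linarith
  qed
qed

definition S :: real where "S = (\<Sum>k. \<phi> (Suc k))"

lemma S_nonneg: "0 \<le> S"
  unfolding S_def using phi_summable phi_nonneg by (simp add: suminf_nonneg)

lemma phi_le_S: "k \<ge> 1 \<Longrightarrow> \<phi> k \<le> S"
proof -
  assume "k \<ge> 1"
  then obtain m where k: "k = Suc m" by (cases k) auto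
  have "(\<Sum>i\<in>{m}. \<phi> (Suc i)) \<le> S" unfolding S_def
    by (rule sum_le_suminf[OF phi_summable]) (auto simp: phi_nonneg)
  thus ?thesis using k by simp
qed

lemma k_phi_le_S: "real k * \<phi> k \<le> S"
proof -
  have "real k * \<phi> k = (\<Sum>i<k. \<phi> k)" by simp
  also have "\<dots> \<le> (\<Sum>i<k. \<phi> (Suc i))"
    by (intro sum_mono) (use phidec in \<open>auto simp: decseq_def\<close>)
  also have "\<dots> \<le> S" unfolding S_def
    by (rule sum_le_suminf[OF phi_summable]) (auto simp: phi_nonneg)
  finally show ?thesis .
qed

lemma offdiag_right: assumes "finite J" shows "(\<Sum>j\<in>{j\<in>J. i < j}. \<phi> (j - i)) \<le> S"
proof -
  have inj: "inj_on (\<lambda>j. j - i - 1) {j\<in>J. i < j}" by (auto simp: inj_on_def)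
  have "(\<Sum>j\<in>{j\<in>J. i < j}. \<phi> (j - i)) = (\<Sum>j\<in>{j\<in>J. i < j}. \<phi> (Suc (j - i - 1)))"
    by (intro sum.cong refl) (auto simp: Suc_diff_Suc)
  also have "\<dots> = (\<Sum>k\<in>(\<lambda>j. j - i - 1) ` {j\<in>J. i < j}. \<phi> (Suc k))"
    by (rule sum.reindex_cong[OF inj refl, symmetric]) simp
  also have "\<dots> \<le> S" unfolding S_def
    by (rule sum_le_suminf[OF phi_summable]) (use assms in \<open>auto simp: phi_nonneg\<close>)
  finally show ?thesis .
qed

lemma offdiag_left: assumes "finite J" shows "(\<Sum>j\<in>{j\<in>J. j < i}. \<phi> (i - j)) \<le> S"
proof -
  have inj: "inj_on (\<lambda>j. i - j - 1) {j\<in>J. j < i}" by (auto simp: inj_on_def)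
  have "(\<Sum>j\<in>{j\<in>J. j < i}. \<phi> (i - j)) = (\<Sum>j\<in>{j\<in>J. j < i}. \<phi> (Suc (i - j - 1)))"
    by (intro sum.cong refl) (auto simp: Suc_diff_Suc)
  also have "\<dots> = (\<Sum>k\<in>(\<lambda>j. i - j - 1) ` {j\<in>J. j < i}. \<phi> (Suc k))"
    by (rule sum.reindex_cong[OF inj refl, symmetric]) simp
  also have "\<dots> \<le> S" unfolding S_def
    by (rule sum_le_suminf[OF phi_summable]) (use assms in \<open>auto simp: phi_nonneg\<close>)
  finally show ?thesis .
qed

definition Ac :: real where "Ac = 2 * (1 + 2 * S) + 15 * S"

end

context mixE begin

definition w :: "nat \<Rightarrow> nat \<Rightarrow> real" where
  "w i j = (if i = j then 1 else if i < j then \<phi> (j - i) else \<phi> (i - j))"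

lemma w_row: assumes "finite J" shows "(\<Sum>j\<in>J. w i j) \<le> 1 + 2 * S"
proof -
  have "(\<Sum>j\<in>J. w i j) = (\<Sum>j\<in>J. (if j = i then 1 else 0) + ((if i < j then \<phi> (j - i) else 0) + (if j < i then \<phi> (i - j) else 0)))"
    by (intro sum.cong refl) (auto simp: w_def)
  also have "\<dots> = (\<Sum>j\<in>J. if j = i then 1 else 0) + ((\<Sum>j\<in>J. if i < j then \<phi> (j - i) else 0) + (\<Sum>j\<in>J. if j < i then \<phi> (i - j) else 0))"
    by (simp add: sum.distrib)
  also have "(\<Sum>j\<in>J. if j = i then 1 else 0) \<le> (1::real)"
    using assms by (simp add: sum.delta)
  also have "(\<Sum>j\<in>J. if i < j then \<phi> (j - i) else 0) = (\<Sum>j\<in>{j\<in>J. i < j}. \<phi> (j - i))"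
    by (simp add: sum.inter_filter[OF assms])
  also have "(\<Sum>j\<in>J. if j < i then \<phi> (i - j) else 0) = (\<Sum>j\<in>{j\<in>J. j < i}. \<phi> (i - j))"
    by (simp add: sum.inter_filter[OF assms])
  finally show ?thesis using offdiag_left[OF assms, of i] offdiag_right[OF assms, of i] by linarith
qed

lemma ind_int: "i \<ge> 1 \<Longrightarrow> integrable M (\<lambda>\<omega>. indicator (E i) \<omega> :: real)"
  using E_sets by (simp add: integrable_indicator_iff less_top[symmetric] emeasure_finite)

lemma cov_int: assumes "i \<ge> 1" "j \<ge> 1"
  shows "(\<integral>\<omega>. (indicator (E i) \<omega> - q) * (indicator (E j) \<omega> - q) \<partial>M) = prob (E i \<inter> E j) - q\<^sup>2"
proof -
  have eq: "(indicator (E i) \<omega> - q) * (indicator (E j) \<omega> - q) =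
     (indicator (E i \<inter> E j) \<omega> - q * indicator (E i) \<omega>) - (q * indicator (E j) \<omega> - q\<^sup>2)" for \<omega>
    by (simp add: indicator_def power2_eq_square algebra_simps)
  have Iij: "E i \<inter> E j \<in> sets M" using E_sets assms by auto
  have int1: "integrable M (\<lambda>\<omega>. indicator (E i \<inter> E j) \<omega> :: real)"
    using Iij by (simp add: integrable_indicator_iff less_top[symmetric] emeasure_finite)
  have "(\<integral>\<omega>. (indicator (E i) \<omega> - q) * (indicator (E j) \<omega> - q) \<partial>M)
     = (\<integral>\<omega>. (indicator (E i \<inter> E j) \<omega> - q * indicator (E i) \<omega>) - (q * indicator (E j) \<omega> - q\<^sup>2) \<partial>M)"
    unfolding eq ..
  also have "\<dots> = ((\<integral>\<omega>. indicator (E i \<inter> E j) \<omega> \<partial>M) - q * (\<integral>\<omega>. indicator (E i) \<omega> \<partial>M))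
        - (q * (\<integral>\<omega>. indicator (E j) \<omega> \<partial>M) - q\<^sup>2)"
    using int1 ind_int[OF assms(1)] ind_int[OF assms(2)] by (simp add: prob_space)
  also have "\<dots> = prob (E i \<inter> E j) - q\<^sup>2"
    using Iij E_sets assms Eq by (simp add: sets.Int_space_eq2 power2_eq_square)
  finally show ?thesis .
qed

lemma cov_bound: assumes "i \<ge> 1" "j \<ge> 1"
  shows "prob (E i \<inter> E j) - q\<^sup>2 \<le> w i j"
proof -
  have key: "prob (E a \<inter> E b) - q\<^sup>2 \<le> \<phi> (b - a)" if ab: "1 \<le> a" "a < b" for a b
  proof -
    have A: "E a \<in> G {1..a}" using EG[of a] G_mono[of "{a}" "{1..a}"] ab by auto
    have B: "E b \<in> G {a + (b - a)..}" using EG[of b] G_mono[of "{b}" "{a + (b-a)..}"] ab by auto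
    have "prob (E a \<inter> E b) \<le> prob (E a) * (prob (E b) + \<phi> (b - a))" by (rule ev_ineq[OF ab(1) A B])
    also have "\<dots> = q * q + q * \<phi> (b - a)" using Eq ab by (simp add: algebra_simps)
    also have "q * \<phi> (b - a) \<le> \<phi> (b - a)" using q_bounds phi_nonneg by (simp add: mult_left_le_one_le)
    finally show ?thesis by (simp add: power2_eq_square)
  qed
  show ?thesis
  proof (cases "i = j")
    case True
    have "prob (E i \<inter> E j) \<le> 1" by simp
    moreover have "0 \<le> q\<^sup>2" by simp
    moreover have "w i j = 1" using True by (simp add: w_def)
    ultimately show ?thesis by linarith
  next
    case False
    show ?thesis
    proof (cases "i < j")
      case True thus ?thesis using key[OF assms(1) True] False by (simp add: w_def)
    next
      case F2: False
      hence "j < i" using False by simp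
      thus ?thesis using key[OF assms(2) \<open>j < i\<close>] False F2 by (simp add: w_def Int_commute)
    qed
  qed
qed

lemma T2_bound: assumes J: "finite J" "J \<subseteq> {1..}"
  shows "(\<integral>\<omega>. (T J \<omega>)\<^sup>2 \<partial>M) \<le> real (card J) * (1 + 2 * S)"
proof -
  have "(\<integral>\<omega>. (T J \<omega>)\<^sup>2 \<partial>M) = (\<integral>\<omega>. (\<Sum>i\<in>J. \<Sum>j\<in>J. (indicator (E i) \<omega> - q) * (indicator (E j) \<omega> - q)) \<partial>M)"
    by (simp add: T_sum[OF J(1)] power2_eq_square sum_product)
  also have "\<dots> = (\<Sum>i\<in>J. \<Sum>j\<in>J. \<integral>\<omega>. (indicator (E i) \<omega> - q) * (indicator (E j) \<omega> - q) \<partial>M)"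
  proof -
    have int: "integrable M (\<lambda>\<omega>. (indicator (E i) \<omega> - q) * (indicator (E j) \<omega> - q) :: real)" if "i \<in> J" "j \<in> J" for i j
    proof (rule integrable_bdd[where B=1])
      show "(\<lambda>\<omega>. (indicator (E i) \<omega> - q) * (indicator (E j) \<omega> - q)) \<in> borel_measurable M"
        using that J ind_meas by (auto intro!: borel_measurable_times borel_measurable_diff)
      fix \<omega>
      have "\<bar>indicator (E i) \<omega> - q\<bar> \<le> 1" "\<bar>indicator (E j) \<omega> - q\<bar> \<le> 1"
        using q_bounds by (auto simp: indicator_def)
      thus "\<bar>(indicator (E i) \<omega> - q) * (indicator (E j) \<omega> - q)\<bar> \<le> 1"
        by (simp add: abs_mult mult_le_one)
    qed
    show ?thesis
      by (subst Bochner_Integration.integral_sum) (auto intro!: Bochner_Integration.integrable_sum int sum.cong Bochner_Integration.integral_sum)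
  qed
  also have "\<dots> \<le> (\<Sum>i\<in>J. \<Sum>j\<in>J. w i j)"
  proof (intro sum_mono)
    fix i j assume "i \<in> J" "j \<in> J"
    hence ij: "i \<ge> 1" "j \<ge> 1" using J by auto
    show "(\<integral>\<omega>. (indicator (E i) \<omega> - q) * (indicator (E j) \<omega> - q) \<partial>M) \<le> w i j"
      using cov_int[OF ij] cov_bound[OF ij] by simp
  qed
  also have "\<dots> \<le> (\<Sum>i\<in>J. 1 + 2 * S)"
    by (intro sum_mono w_row J)
  finally show ?thesis by simp
qed

lemma exp_quad: "(x::real) \<le> 1 \<Longrightarrow> exp x \<le> 1 + x + x\<^sup>2"
proof (cases "x \<ge> 0")
  case True
  assume "x \<le> 1" thus ?thesis using exp_bound[OF True] by simp
next
  case False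
  define y where "y = - x"
  have y: "y > 0" using False y_def by simp
  have a: "1 + y + y\<^sup>2 / 2 \<le> exp y" using exp_lower_Taylor_quadratic[of y] y by simp
  have pos: "0 < 1 - y + y\<^sup>2"
  proof -
    have "0 \<le> (y - 1/2)\<^sup>2" by simp
    thus ?thesis by (simp add: power2_eq_square algebra_simps)
  qed
  have "1 \<le> (1 - y + y\<^sup>2) * (1 + y + y\<^sup>2 / 2)"
  proof -
    have "(1 - y + y\<^sup>2) * (1 + y + y\<^sup>2 / 2) = 1 + y\<^sup>2 / 2 + y^3 / 2 + y^4 / 2"
      by (simp add: power2_eq_square power3_eq_cube power4_eq_xxxx field_simps)
    thus ?thesis using y by simp
  qed
  also have "\<dots> \<le> (1 - y + y\<^sup>2) * exp y" using a pos by (intro mult_left_mono) auto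
  finally have "1 / exp y \<le> 1 - y + y\<^sup>2" by (simp add: divide_le_eq mult.commute)
  thus ?thesis unfolding y_def by (simp add: exp_minus field_simps)
qed

lemma mgf_block: assumes J: "finite J" "J \<subseteq> {1..}" and l: "0 \<le> l" "l * real (card J) \<le> 1"
  shows "(\<integral>\<omega>. exp (l * T J \<omega>) \<partial>M) \<le> 1 + l\<^sup>2 * (real (card J) * (1 + 2 * S))"
proof -
  have Tm: "T J \<in> borel_measurable M" by (rule T_measM[OF J])
  have Tb: "\<bar>T J \<omega>\<bar> \<le> real (card J)" for \<omega> by (rule T_abs[OF J(1)])
  have iT: "integrable M (T J)" by (rule integrable_bdd[OF Tm Tb])
  have iT2: "integrable M (\<lambda>\<omega>. (T J \<omega>)\<^sup>2)"
  proof (rule integrable_bdd[where B="real (card J)^2"])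
    show "(\<lambda>\<omega>. (T J \<omega>)\<^sup>2) \<in> borel_measurable M" using Tm by simp
    fix \<omega> show "\<bar>(T J \<omega>)\<^sup>2\<bar> \<le> real (card J)^2"
      using power_mono[OF Tb[of \<omega>], of 2] by simp
  qed
  have iE: "integrable M (\<lambda>\<omega>. exp (l * T J \<omega>))"
  proof (rule integrable_bdd[where B="exp (l * real (card J))"])
    show "(\<lambda>\<omega>. exp (l * T J \<omega>)) \<in> borel_measurable M" using Tm by simp
    fix \<omega> show "\<bar>exp (l * T J \<omega>)\<bar> \<le> exp (l * real (card J))"
      using T_bounds(1)[OF J(1), of \<omega>] l by (simp add: mult_left_mono)
  qed
  have "(\<integral>\<omega>. exp (l * T J \<omega>) \<partial>M) \<le> (\<integral>\<omega>. 1 + l * T J \<omega> + l\<^sup>2 * (T J \<omega>)\<^sup>2 \<partial>M)"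
  proof (rule integral_mono[OF iE])
    show "integrable M (\<lambda>\<omega>. 1 + l * T J \<omega> + l\<^sup>2 * (T J \<omega>)\<^sup>2)" using iT iT2 by simp
    fix \<omega>
    have "l * T J \<omega> \<le> l * real (card J)" using T_bounds(1)[OF J(1), of \<omega>] l by (simp add: mult_left_mono)
    hence "l * T J \<omega> \<le> 1" using l by linarith
    from exp_quad[OF this] show "exp (l * T J \<omega>) \<le> 1 + l * T J \<omega> + l\<^sup>2 * (T J \<omega>)\<^sup>2"
      by (simp add: power_mult_distrib)
  qed
  also have "\<dots> = 1 + l * (\<integral>\<omega>. T J \<omega> \<partial>M) + l\<^sup>2 * (\<integral>\<omega>. (T J \<omega>)\<^sup>2 \<partial>M)"
    using iT iT2 by (simp add: prob_space)
  also have "\<dots> \<le> 1 + l\<^sup>2 * (real (card J) * (1 + 2 * S))"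
    using T2_bound[OF J] integral_T[OF J] by (simp add: mult_left_mono)
  finally show ?thesis .
qed

definition Ublk :: "nat \<Rightarrow> nat \<Rightarrow> nat \<Rightarrow> nat \<Rightarrow> nat set" where
  "Ublk n L s k = {i. 1 \<le> i \<and> i \<le> n \<and> (i - 1) div L < 2 * k \<and> ((i - 1) div L) mod 2 = s}"

definition Jblk :: "nat \<Rightarrow> nat \<Rightarrow> nat \<Rightarrow> nat set" where
  "Jblk n L b = {i. 1 \<le> i \<and> i \<le> n \<and> (i - 1) div L = b}"

lemma Ublk_fin: "finite (Ublk n L s k)" "Ublk n L s k \<subseteq> {1..}"
  unfolding Ublk_def by (auto intro: finite_subset[of _ "{..n}"])

lemma Jblk_fin: "finite (Jblk n L b)" "Jblk n L b \<subseteq> {1..}"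
  unfolding Jblk_def by (auto intro: finite_subset[of _ "{..n}"])

lemma Ublk_0: "Ublk n L s 0 = {}"
  unfolding Ublk_def by auto

lemma par_aux: "(s::nat) < 2 \<Longrightarrow> (d < 2 * Suc k \<and> d mod 2 = s) \<longleftrightarrow> ((d < 2 * k \<and> d mod 2 = s) \<or> d = 2 * k + s)"
  by presburger

lemma par_aux2: "(s::nat) < 2 \<Longrightarrow> k \<ge> 1 \<Longrightarrow> d < 2 * k \<Longrightarrow> d mod 2 = s \<Longrightarrow> d < 2 * k - 1 + s"
  by presburger

lemma Ublk_Suc: assumes "s < 2" shows "Ublk n L s (Suc k) = Ublk n L s k \<union> Jblk n L (2 * k + s)"
proof -
  have "\<And>d. (d < 2 * Suc k \<and> d mod 2 = s) \<longleftrightarrow> ((d < 2 * k \<and> d mod 2 = s) \<or> d = 2 * k + s)"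
    using par_aux[OF assms] by blast
  thus ?thesis unfolding Ublk_def Jblk_def using assms by auto
qed

lemma Ublk_disj: "Ublk n L s k \<inter> Jblk n L (2 * k + s) = {}"
  unfolding Ublk_def Jblk_def by auto

lemma Ublk_sub: assumes "k \<ge> 1" "L \<ge> 1" "s < 2"
  shows "Ublk n L s k \<subseteq> {1..(2 * k - 1 + s) * L}"
proof
  fix i assume "i \<in> Ublk n L s k"
  hence i: "1 \<le> i" "(i - 1) div L < 2 * k" "((i - 1) div L) mod 2 = s" unfolding Ublk_def by auto
  have "(i - 1) div L < 2 * k - 1 + s" using par_aux2[OF assms(3) assms(1) i(2) i(3)] .
  hence "i - 1 < (2 * k - 1 + s) * L" using assms by (simp add: div_less_iff_less_mult)
  thus "i \<in> {1..(2 * k - 1 + s) * L}" using i by auto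
qed

lemma Jblk_sub: assumes "L \<ge> 1" shows "Jblk n L b \<subseteq> {b * L + 1..}"
proof
  fix i assume "i \<in> Jblk n L b"
  hence i: "1 \<le> i" "(i - 1) div L = b" unfolding Jblk_def by auto
  have "b * L \<le> i - 1" using i div_times_less_eq_dividend[of "i - 1" L] by simp
  thus "i \<in> {b * L + 1..}" using i by auto
qed

lemma Jblk_card: assumes "L \<ge> 1" shows "card (Jblk n L b) \<le> L"
proof -
  have "Jblk n L b \<subseteq> {b * L + 1..b * L + L}"
  proof
    fix i assume "i \<in> Jblk n L b"
    hence i: "1 \<le> i" "(i - 1) div L = b" unfolding Jblk_def by auto
    have "b * L \<le> i - 1" using i div_times_less_eq_dividend[of "i - 1" L] by simp
    moreover have "i - 1 < (b + 1) * L"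
    proof -
      have m: "(i - 1) mod L < L" using assms by simp
      have e0: "(i - 1) div L * L + (i - 1) mod L = i - 1" by (rule div_mult_mod_eq)
      hence e: "b * L + (i - 1) mod L = i - 1" by (simp only: i(2))
      have "(b + 1) * L = b * L + L" by simp
      thus ?thesis using e m i(2) by linarith
    qed
    moreover have "(b + 1) * L = b * L + L" by simp
    ultimately have "b * L + 1 \<le> i" "i \<le> b * L + L" using i(1) by linarith+
    thus "i \<in> {b * L + 1..b * L + L}" by simp
  qed
  from card_mono[OF _ this] show ?thesis by simp
qed

lemma Ublk_all: assumes "L \<ge> 1" "n div L < k" shows "Ublk n L 0 k \<union> Ublk n L 1 k = {1..n}" "Ublk n L 0 k \<inter> Ublk n L 1 k = {}"
proof -
  have "(i - 1) div L < 2 * k" if "i \<le> n" for i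
  proof -
    have "(i - 1) div L \<le> n div L" by (rule div_le_mono) (use that in auto)
    thus ?thesis using assms by linarith
  qed
  thus "Ublk n L 0 k \<union> Ublk n L 1 k = {1..n}" unfolding Ublk_def by auto
  show "Ublk n L 0 k \<inter> Ublk n L 1 k = {}" unfolding Ublk_def by auto
qed

lemma T_union: "finite J \<Longrightarrow> finite K \<Longrightarrow> J \<inter> K = {} \<Longrightarrow> T (J \<union> K) \<omega> = T J \<omega> + T K \<omega>"
  unfolding T_def by (simp add: cnt_union card_Un_disjoint algebra_simps)

lemma T_empty: "T {} \<omega> = 0"
  unfolding T_def cnt_def by simp

lemma exp_T_int: "finite J \<Longrightarrow> J \<subseteq> {1..} \<Longrightarrow> integrable M (\<lambda>\<omega>. exp (l * T J \<omega>))"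
proof -
  assume J: "finite J" "J \<subseteq> {1..}"
  show ?thesis
  proof (rule integrable_bdd[where B="exp (\<bar>l\<bar> * real (card J))"])
    show "(\<lambda>\<omega>. exp (l * T J \<omega>)) \<in> borel_measurable M" using T_measM[OF J] by simp
    fix \<omega>
    have "l * T J \<omega> \<le> \<bar>l\<bar> * real (card J)"
    proof -
      have "l * T J \<omega> \<le> \<bar>l * T J \<omega>\<bar>" by simp
      also have "\<dots> = \<bar>l\<bar> * \<bar>T J \<omega>\<bar>" by (simp add: abs_mult)
      also have "\<dots> \<le> \<bar>l\<bar> * real (card J)" by (intro mult_left_mono T_abs J) simp
      finally show ?thesis .
    qed
    thus "\<bar>exp (l * T J \<omega>)\<bar> \<le> exp (\<bar>l\<bar> * real (card J))" by simp
  qed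
qed

lemma mgf_prod:
  assumes L: "L \<ge> 1" and s: "s < 2" and l: "0 \<le> l" "l * real L \<le> 1"
  shows "(\<integral>\<omega>. exp (l * T (Ublk n L s k) \<omega>) \<partial>M) \<le> (1 + l\<^sup>2 * (real L * (1 + 2 * S)) + \<phi> L * exp 1) ^ k"
proof (induction k)
  case 0
  show ?case by (simp add: Ublk_0 T_empty prob_space)
next
  case (Suc k)
  let ?U = "Ublk n L s k" and ?J = "Jblk n L (2 * k + s)"
  let ?F = "1 + l\<^sup>2 * (real L * (1 + 2 * S)) + \<phi> L * exp 1"
  have cJ: "card ?J \<le> L" by (rule Jblk_card[OF L])
  have lJ: "l * real (card ?J) \<le> 1"
  proof -
    have "l * real (card ?J) \<le> l * real L" using cJ l by (intro mult_left_mono) auto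
    thus ?thesis using l by linarith
  qed
  have blk: "(\<integral>\<omega>. exp (l * T ?J \<omega>) \<partial>M) \<le> 1 + l\<^sup>2 * (real L * (1 + 2 * S))"
  proof -
    have "(\<integral>\<omega>. exp (l * T ?J \<omega>) \<partial>M) \<le> 1 + l\<^sup>2 * (real (card ?J) * (1 + 2 * S))"
      by (rule mgf_block[OF Jblk_fin l(1) lJ])
    also have "\<dots> \<le> 1 + l\<^sup>2 * (real L * (1 + 2 * S))"
      using cJ S_nonneg by (intro add_left_mono mult_left_mono mult_right_mono) auto
    finally show ?thesis .
  qed
  have F0: "0 \<le> \<phi> L * exp 1" using phi_nonneg by simp
  have Tsplit: "T (Ublk n L s (Suc k)) \<omega> = T ?U \<omega> + T ?J \<omega>" for \<omega>
    unfolding Ublk_Suc[OF s] by (rule T_union[OF Ublk_fin(1) Jblk_fin(1) Ublk_disj])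
  show ?case
  proof (cases "k = 0")
    case True
    have "(\<integral>\<omega>. exp (l * T (Ublk n L s (Suc k)) \<omega>) \<partial>M) = (\<integral>\<omega>. exp (l * T ?J \<omega>) \<partial>M)"
      unfolding Tsplit using True by (simp add: Ublk_0 T_empty)
    also have "\<dots> \<le> ?F" using blk F0 by linarith
    finally show ?thesis using True by simp
  next
    case False
    hence k1: "k \<ge> 1" by simp
    define a where "a = (2 * k - 1 + s) * L"
    have a1: "a \<ge> 1" using k1 L unfolding a_def by simp
    have Usub: "?U \<subseteq> {1..a}" unfolding a_def by (rule Ublk_sub[OF k1 L s])
    have Jsub: "?J \<subseteq> {a + (L + 1)..}"
    proof -
      have "a + (L + 1) = (2 * k - 1 + s + 1) * L + 1" unfolding a_def by (simp add: algebra_simps)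
      also have "2 * k - 1 + s + 1 = 2 * k + s" using k1 by simp
      finally have "a + (L + 1) = (2 * k + s) * L + 1" .
      thus ?thesis using Jblk_sub[OF L, of n "2 * k + s"] by simp
    qed
    define h1 where "h1 = (\<lambda>c::nat. exp (l * (real c - q * real (card ?U))))"
    define h2 where "h2 = (\<lambda>c::nat. exp (l * (real c - q * real (card ?J))))"
    have mh1: "mono h1" unfolding h1_def by (rule monoI) (use l in \<open>auto intro!: mult_left_mono\<close>)
    have mh2: "mono h2" unfolding h2_def by (rule monoI) (use l in \<open>auto intro!: mult_left_mono\<close>)
    have eq: "exp (l * T (Ublk n L s (Suc k)) \<omega>) = h1 (cnt ?U \<omega>) * h2 (cnt ?J \<omega>)" for \<omega>
      unfolding Tsplit unfolding h1_def h2_def T_def by (simp add: distrib_left exp_add)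
    have "(\<integral>\<omega>. exp (l * T (Ublk n L s (Suc k)) \<omega>) \<partial>M) = (\<integral>\<omega>. h1 (cnt ?U \<omega>) * h2 (cnt ?J \<omega>) \<partial>M)"
      unfolding eq ..
    also have "\<dots> \<le> (\<integral>\<omega>. h1 (cnt ?U \<omega>) \<partial>M) * ((\<integral>\<omega>. h2 (cnt ?J \<omega>) \<partial>M) + \<phi> (L + 1) * h2 (card ?J))"
      by (rule dec[OF Ublk_fin(1) Jblk_fin(1) Usub a1 Jsub mh1 _ mh2]) (auto simp: h1_def h2_def)
    also have "\<dots> \<le> ?F ^ k * ?F"
    proof (rule mult_mono)
      have "(\<integral>\<omega>. h1 (cnt ?U \<omega>) \<partial>M) = (\<integral>\<omega>. exp (l * T ?U \<omega>) \<partial>M)"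
        unfolding h1_def T_def ..
      thus "(\<integral>\<omega>. h1 (cnt ?U \<omega>) \<partial>M) \<le> ?F ^ k" using Suc.IH by simp
      have "0 \<le> l\<^sup>2 * (real L * (1 + 2 * S))" using S_nonneg by simp
      hence "0 \<le> ?F" using F0 by linarith
      thus "0 \<le> ?F ^ k" by simp
      have "0 \<le> (\<integral>\<omega>. h2 (cnt ?J \<omega>) \<partial>M)" unfolding h2_def by simp
      moreover have "0 \<le> \<phi> (L + 1) * h2 (card ?J)" using phi_nonneg by (simp add: h2_def)
      ultimately show "0 \<le> (\<integral>\<omega>. h2 (cnt ?J \<omega>) \<partial>M) + \<phi> (L + 1) * h2 (card ?J)" by linarith
      have i2: "(\<integral>\<omega>. h2 (cnt ?J \<omega>) \<partial>M) = (\<integral>\<omega>. exp (l * T ?J \<omega>) \<partial>M)"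
        unfolding h2_def T_def ..
      have ph: "\<phi> (L + 1) \<le> \<phi> L" using phidec by (simp add: decseq_Suc_iff)
      have "h2 (card ?J) \<le> exp 1"
      proof -
        have "l * (real (card ?J) - q * real (card ?J)) \<le> l * real (card ?J)"
          using l q_bounds by (intro mult_left_mono) auto
        thus ?thesis unfolding h2_def using lJ by simp
      qed
      hence "\<phi> (L + 1) * h2 (card ?J) \<le> \<phi> L * exp 1"
        using ph phi_nonneg by (intro mult_mono) (auto simp: h2_def)
      thus "(\<integral>\<omega>. h2 (cnt ?J \<omega>) \<partial>M) + \<phi> (L + 1) * h2 (card ?J) \<le> ?F"
        using i2 blk by linarith
    qed
    finally show ?thesis by (simp add: mult.commute)
  qed
qed

lemma T_ge_sets: "finite J \<Longrightarrow> J \<subseteq> {1..} \<Longrightarrow> {\<omega>\<in>space M. t \<le> T J \<omega>} \<in> sets M"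
  using T_measM by measurable

lemma markov_T: assumes J: "finite J" "J \<subseteq> {1..}" and l: "0 \<le> l"
  shows "prob {\<omega>\<in>space M. t \<le> T J \<omega>} \<le> exp (- l * t) * (\<integral>\<omega>. exp (l * T J \<omega>) \<partial>M)"
proof -
  let ?A = "{\<omega>\<in>space M. t \<le> T J \<omega>}"
  have AM: "?A \<in> sets M" by (rule T_ge_sets[OF J])
  have "prob ?A = (\<integral>\<omega>. 1 * indicator ?A \<omega> \<partial>M)" using integral_c_ind[OF AM, of 1] by simp
  also have "\<dots> \<le> (\<integral>\<omega>. exp (- l * t) * exp (l * T J \<omega>) \<partial>M)"
  proof (rule integral_mono)
    show "integrable M (\<lambda>\<omega>. 1 * indicator ?A \<omega> :: real)" by (rule integrable_ind[OF AM])
    show "integrable M (\<lambda>\<omega>. exp (- l * t) * exp (l * T J \<omega>))"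
      by (intro integrable_mult_right exp_T_int J)
    fix \<omega> assume "\<omega> \<in> space M"
    show "1 * indicator ?A \<omega> \<le> exp (- l * t) * exp (l * T J \<omega>)"
    proof (cases "t \<le> T J \<omega>")
      case True
      have "0 \<le> l * (T J \<omega> - t)" using True l by simp
      hence "1 \<le> exp (l * (T J \<omega> - t))" by simp
      also have "\<dots> = exp (- l * t) * exp (l * T J \<omega>)" by (simp add: exp_add[symmetric] algebra_simps)
      finally show ?thesis by (simp add: indicator_def)
    next
      case False thus ?thesis by (simp add: indicator_def)
    qed
  qed
  also have "\<dots> = exp (- l * t) * (\<integral>\<omega>. exp (l * T J \<omega>) \<partial>M)" by simp
  finally show ?thesis .
qed

lemma tail_blocks:
  assumes L: "L \<ge> 1" and l: "0 \<le> l" "l * real L \<le> 1" and k: "n div L < k"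
  shows "prob {\<omega>\<in>space M. 2 * t \<le> T {1..n} \<omega>}
     \<le> 2 * ((1 + l\<^sup>2 * (real L * (1 + 2 * S)) + \<phi> L * exp 1) ^ k * exp (- l * t))"
proof -
  let ?F = "(1 + l\<^sup>2 * (real L * (1 + 2 * S)) + \<phi> L * exp 1) ^ k"
  let ?U0 = "Ublk n L 0 k" and ?U1 = "Ublk n L 1 k"
  have split: "T {1..n} \<omega> = T ?U0 \<omega> + T ?U1 \<omega>" for \<omega>
    using T_union[OF Ublk_fin(1) Ublk_fin(1) Ublk_all(2)[OF L k]] Ublk_all(1)[OF L k] by simp
  have sub: "{\<omega>\<in>space M. 2 * t \<le> T {1..n} \<omega>} \<subseteq> {\<omega>\<in>space M. t \<le> T ?U0 \<omega>} \<union> {\<omega>\<in>space M. t \<le> T ?U1 \<omega>}"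
    using split by force
  have b: "prob {\<omega>\<in>space M. t \<le> T (Ublk n L s k) \<omega>} \<le> ?F * exp (- l * t)" if "s < 2" for s
  proof -
    have "prob {\<omega>\<in>space M. t \<le> T (Ublk n L s k) \<omega>} \<le> exp (- l * t) * (\<integral>\<omega>. exp (l * T (Ublk n L s k) \<omega>) \<partial>M)"
      by (rule markov_T[OF Ublk_fin l(1)])
    also have "\<dots> \<le> exp (- l * t) * ?F"
      by (intro mult_left_mono mgf_prod[OF L that l]) simp
    finally show ?thesis by (simp add: mult.commute)
  qed
  have "prob {\<omega>\<in>space M. 2 * t \<le> T {1..n} \<omega>} \<le> prob ({\<omega>\<in>space M. t \<le> T ?U0 \<omega>} \<union> {\<omega>\<in>space M. t \<le> T ?U1 \<omega>})"
    by (rule finite_measure_mono[OF sub]) (intro sets.Un T_ge_sets Ublk_fin)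
  also have "\<dots> \<le> prob {\<omega>\<in>space M. t \<le> T ?U0 \<omega>} + prob {\<omega>\<in>space M. t \<le> T ?U1 \<omega>}"
    by (rule measure_Un_le) (intro T_ge_sets Ublk_fin)+
  also have "\<dots> \<le> 2 * (?F * exp (- l * t))" using b[of 0] b[of 1] by simp
  finally show ?thesis .
qed


lemma tail_final: assumes n: "n \<ge> 3"
  shows "prob {\<omega>\<in>space M. 2 * ((Ac + 2) * sqrt (real n * ln (real n))) \<le> T {1..n} \<omega>} \<le> 2 / (real n)\<^sup>2"
proof -
  define Ln where "Ln = ln (real n)"
  define D where "D = 1 + 2 * S"
  define r where "r = sqrt (real n / Ln)"
  define l where "l = sqrt (Ln / real n)"
  define L where "L = nat \<lfloor>r\<rfloor>"
  define k where "k = n div L + 1"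
  define t where "t = (Ac + 2) * sqrt (real n * Ln)"
  have S0: "0 \<le> S" by (rule S_nonneg)
  have D1: "1 \<le> D" unfolding D_def using S0 by simp
  have npos: "0 < real n" using n by simp
  have Ln1: "1 \<le> Ln"
  proof -
    have "exp 1 \<le> real n" using e_less_272 n by linarith
    hence "ln (exp 1) \<le> ln (real n)" using npos by (subst ln_le_cancel_iff) auto
    thus ?thesis unfolding Ln_def by simp
  qed
  have Lnn: "Ln \<le> real n" unfolding Ln_def using ln_less_self[OF npos] by simp
  have r1: "1 \<le> r" unfolding r_def using Ln1 Lnn by simp
  have rn: "r \<le> real n"
  proof -
    have "real n / Ln \<le> real n" using Ln1 npos by (simp add: divide_le_eq mult_le_cancel_left1)
    also have "\<dots> \<le> (real n)\<^sup>2" using n by (simp add: power2_eq_square)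
    finally have "real n / Ln \<le> (real n)\<^sup>2" .
    hence "sqrt (real n / Ln) \<le> sqrt ((real n)\<^sup>2)" by (rule real_sqrt_le_mono)
    thus ?thesis unfolding r_def using npos by simp
  qed
  have r2: "r\<^sup>2 = real n / Ln" unfolding r_def using Ln1 npos by simp
  have L1: "L \<ge> 1" unfolding L_def using r1 by linarith
  have Lr: "real L \<le> r" "r < real L + 1" unfolding L_def using r1 by linarith+
  have Ln_pos: "0 \<le> real L" by simp
  have l0: "0 \<le> l" unfolding l_def using Ln1 by simp
  have lr: "l * r = 1" unfolding l_def r_def using Ln1 npos by (simp add: real_sqrt_mult[symmetric])
  have lL: "l * real L \<le> 1" using Lr(1) l0 lr by (metis mult_left_mono)
  have l2: "l\<^sup>2 = Ln / real n" unfolding l_def using Ln1 npos by simp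
  have kL: "n div L < k" unfolding k_def by simp
  have tb: "prob {\<omega>\<in>space M. 2 * t \<le> T {1..n} \<omega>}
     \<le> 2 * ((1 + l\<^sup>2 * (real L * D) + \<phi> L * exp 1) ^ k * exp (- l * t))"
    unfolding D_def by (rule tail_blocks[OF L1 l0 lL kL])
  define x where "x = l\<^sup>2 * (real L * D) + \<phi> L * exp 1"
  have x0: "0 \<le> x" unfolding x_def using D1 phi_nonneg[of L] by simp
  have Fk: "(1 + x) ^ k \<le> exp (real k * x)"
  proof -
    have "(1 + x) ^ k \<le> (exp x) ^ k" by (rule power_mono) (use x0 in auto)
    thus ?thesis by (simp add: exp_of_nat_mult[symmetric])
  qed
  have divL: "real (n div L) * real L \<le> real n"
  proof -
    have "n div L * L \<le> n" by (rule div_times_less_eq_dividend)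
    hence "real (n div L * L) \<le> real n" by linarith
    thus ?thesis by simp
  qed
  have Lle: "real L \<le> real n" using Lr(1) rn by linarith
  have kx1: "real k * (l\<^sup>2 * (real L * D)) \<le> 2 * D * Ln"
  proof -
    have "real k * (l\<^sup>2 * (real L * D)) = (real (n div L) * real L + real L) * D * Ln / real n"
      unfolding k_def l2 by (simp add: algebra_simps)
    also have "\<dots> \<le> (2 * real n) * D * Ln / real n"
      using divL Lle D1 Ln1 npos by (intro divide_right_mono mult_right_mono) auto
    also have "\<dots> = 2 * D * Ln" using npos by simp
    finally show ?thesis .
  qed
  have nL: "real (n div L) \<le> 4 * real L * Ln"
  proof -
    have "r\<^sup>2 < (2 * real L)\<^sup>2" using Lr r1 L1 by (intro power_strict_mono) auto
    hence "real n / Ln < 4 * (real L)\<^sup>2" unfolding r2 by (simp add: power_mult_distrib)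
    hence "real n < 4 * (real L)\<^sup>2 * Ln" using Ln1 by (simp add: divide_less_eq)
    hence "real (n div L) * real L < (4 * real L * Ln) * real L" using divL by (simp add: power2_eq_square algebra_simps)
    hence "real (n div L) < 4 * real L * Ln" using L1 by (simp add: mult_ac)
    thus ?thesis by simp
  qed
  have kx2: "real k * (\<phi> L * exp 1) \<le> 15 * S * Ln"
  proof -
    have e3: "exp 1 \<le> (3::real)" using e_less_272 by linarith
    have "real (n div L) * \<phi> L \<le> 4 * Ln * (real L * \<phi> L)"
      using mult_right_mono[OF nL phi_nonneg[of L]] by (simp add: algebra_simps)
    also have "\<dots> \<le> 4 * Ln * S" using k_phi_le_S[of L] Ln1 by (intro mult_left_mono) auto
    finally have a: "real (n div L) * \<phi> L \<le> 4 * Ln * S" .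
    have "S * 1 \<le> S * Ln" by (rule mult_left_mono[OF Ln1 S0])
    hence b: "\<phi> L \<le> S * Ln" using phi_le_S[OF L1] by linarith
    have X: "real k * \<phi> L \<le> 5 * S * Ln" unfolding k_def using a b by (simp add: algebra_simps)
    have "(real k * \<phi> L) * exp 1 \<le> (5 * S * Ln) * 3"
      by (rule mult_mono[OF X e3]) (use S0 Ln1 in auto)
    thus ?thesis by (simp add: algebra_simps)
  qed
  have kx: "real k * x \<le> Ac * Ln"
    using kx1 kx2 unfolding x_def Ac_def D_def by (simp add: algebra_simps)
  have lt: "l * t = (Ac + 2) * Ln"
  proof -
    have "l * sqrt (real n * Ln) = Ln" unfolding l_def using Ln1 npos
      by (simp add: real_sqrt_mult[symmetric] power2_eq_square[symmetric])
    hence "(Ac + 2) * (l * sqrt (real n * Ln)) = (Ac + 2) * Ln" by simp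
    thus ?thesis unfolding t_def by (simp only: mult_ac)
  qed
  have P: "prob {\<omega>\<in>space M. 2 * t \<le> T {1..n} \<omega>} \<le> 2 * ((1 + x) ^ k * exp (- l * t))"
    using tb unfolding x_def by (simp only: add.assoc)
  have Q: "(1 + x) ^ k * exp (- l * t) \<le> exp (Ac * Ln) * exp (- ((Ac + 2) * Ln))"
  proof (rule mult_mono)
    show "(1 + x) ^ k \<le> exp (Ac * Ln)" using Fk kx by (meson exp_le_cancel_iff order_trans)
    show "exp (- l * t) \<le> exp (- ((Ac + 2) * Ln))" using lt by simp
  qed auto
  have R1: "exp (Ac * Ln) * exp (- ((Ac + 2) * Ln)) = exp (Ac * Ln + - ((Ac + 2) * Ln))"
    by (rule exp_add[symmetric])
  have R2: "Ac * Ln + - ((Ac + 2) * Ln) = - (Ln + Ln)" by (simp add: distrib_right)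
  have R3: "exp (- (Ln + Ln)) = inverse (exp Ln * exp Ln)" by (simp only: exp_minus exp_add)
  have R4: "exp Ln = real n" unfolding Ln_def using npos by simp
  have R: "exp (Ac * Ln) * exp (- ((Ac + 2) * Ln)) = 1 / (real n)\<^sup>2"
    unfolding R1 R2 R3 R4 by (simp add: power2_eq_square inverse_eq_divide)
  have "prob {\<omega>\<in>space M. 2 * t \<le> T {1..n} \<omega>} \<le> 2 / (real n)\<^sup>2"
    using P Q R by simp
  moreover have "2 * t = 2 * ((Ac + 2) * sqrt (real n * ln (real n)))" unfolding t_def Ln_def ..
  ultimately show ?thesis by simp
qed

end

context mix begin

lemma mix_M: "mix M X" by intro_locales

lemma inst_up: assumes marg: "\<And>i x. i \<ge> 1 \<Longrightarrow> F x = prob {\<omega>\<in>space M. X i \<omega> \<le> x}"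
  shows "mixE M X (\<lambda>i. {\<omega>\<in>space M. X i \<omega> \<le> y}) (F y)"
proof (rule mixE.intro[OF mix_M], unfold_locales)
  fix i :: nat assume i: "i \<ge> 1"
  have "X i -` {..y} \<inter> space M \<in> G {i}" by (rule G_pre) auto
  moreover have "X i -` {..y} \<inter> space M = {\<omega>\<in>space M. X i \<omega> \<le> y}" by auto
  ultimately show "{\<omega>\<in>space M. X i \<omega> \<le> y} \<in> G {i}" by simp
  show "prob {\<omega>\<in>space M. X i \<omega> \<le> y} = F y" using marg[OF i] by simp
qed

lemma inst_lo: assumes marg: "\<And>i x. i \<ge> 1 \<Longrightarrow> F x = prob {\<omega>\<in>space M. X i \<omega> \<le> x}"
  shows "mixE M X (\<lambda>i. {\<omega>\<in>space M. y < X i \<omega>}) (1 - F y)"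
proof (rule mixE.intro[OF mix_M], unfold_locales)
  fix i :: nat assume i: "i \<ge> 1"
  have "X i -` {y<..} \<inter> space M \<in> G {i}" by (rule G_pre) auto
  moreover have "X i -` {y<..} \<inter> space M = {\<omega>\<in>space M. y < X i \<omega>}" by auto
  ultimately show "{\<omega>\<in>space M. y < X i \<omega>} \<in> G {i}" by simp
  have m: "{\<omega>\<in>space M. X i \<omega> \<le> y} \<in> sets M" using rv[OF i] by measurable
  have "{\<omega>\<in>space M. y < X i \<omega>} = space M - {\<omega>\<in>space M. X i \<omega> \<le> y}" by auto
  hence "prob {\<omega>\<in>space M. y < X i \<omega>} = 1 - prob {\<omega>\<in>space M. X i \<omega> \<le> y}"
    using prob_compl[OF m] by simp
  thus "prob {\<omega>\<in>space M. y < X i \<omega>} = 1 - F y" using marg[OF i] by simp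
qed

lemma emp_sum: "real n * emp_df X n \<omega> y = (\<Sum>i=1..n. if X i \<omega> \<le> y then 1 else 0)"
  unfolding emp_df_def by (cases "n = 0") auto

lemma T_up_eq: assumes marg: "\<And>i x. i \<ge> 1 \<Longrightarrow> F x = prob {\<omega>\<in>space M. X i \<omega> \<le> x}" and w: "\<omega> \<in> space M"
  shows "mixE.T (\<lambda>i. {\<omega>\<in>space M. X i \<omega> \<le> y}) (F y) {1..n} \<omega> = real n * emp_df X n \<omega> y - real n * F y"
proof -
  interpret U: mixE M X "\<lambda>i. {\<omega>\<in>space M. X i \<omega> \<le> y}" "F y" by (rule inst_up[OF marg])
  have "real (U.cnt {1..n} \<omega>) = (\<Sum>i=1..n. indicator {\<omega>\<in>space M. X i \<omega> \<le> y} \<omega>)" by (rule U.cnt_real) simp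
  also have "\<dots> = (\<Sum>i=1..n. if X i \<omega> \<le> y then 1 else 0)" using w by (intro sum.cong) (auto simp: indicator_def)
  finally show ?thesis unfolding U.T_def emp_sum by simp
qed

lemma T_lo_eq: assumes marg: "\<And>i x. i \<ge> 1 \<Longrightarrow> F x = prob {\<omega>\<in>space M. X i \<omega> \<le> x}" and w: "\<omega> \<in> space M"
  shows "mixE.T (\<lambda>i. {\<omega>\<in>space M. y < X i \<omega>}) (1 - F y) {1..n} \<omega> = - (real n * emp_df X n \<omega> y - real n * F y)"
proof -
  interpret U: mixE M X "\<lambda>i. {\<omega>\<in>space M. y < X i \<omega>}" "1 - F y" by (rule inst_lo[OF marg])
  have "real (U.cnt {1..n} \<omega>) = (\<Sum>i=1..n. indicator {\<omega>\<in>space M. y < X i \<omega>} \<omega>)" by (rule U.cnt_real) simp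
  also have "\<dots> = (\<Sum>i=1..n. 1 - (if X i \<omega> \<le> y then 1 else 0))" using w by (intro sum.cong) (auto simp: indicator_def)
  also have "\<dots> = real n - real n * emp_df X n \<omega> y" by (simp add: sum_subtractf emp_sum)
  finally show ?thesis unfolding U.T_def by (simp add: algebra_simps)
qed

lemma key: assumes marg: "\<And>i x. i \<ge> 1 \<Longrightarrow> F x = prob {\<omega>\<in>space M. X i \<omega> \<le> x}"
  shows "AE \<omega> in M. eventually (\<lambda>n. \<bar>emp_df X n \<omega> (xs n) - F (xs n)\<bar> \<le> 2 * (Ac + 2) * sqrt (ln (real n) / real n)) sequentially"
proof -
  define c where "c = (\<lambda>n::nat. 2 * ((Ac + 2) * sqrt (real n * ln (real n))))"
  define Up where "Up = (\<lambda>n. {\<omega>\<in>space M. c n \<le> mixE.T (\<lambda>i. {\<omega>\<in>space M. X i \<omega> \<le> xs n}) (F (xs n)) {1..n} \<omega>})"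
  define Lo where "Lo = (\<lambda>n. {\<omega>\<in>space M. c n \<le> mixE.T (\<lambda>i. {\<omega>\<in>space M. xs n < X i \<omega>}) (1 - F (xs n)) {1..n} \<omega>})"
  define A where "A = (\<lambda>n. if 3 \<le> n then Up n \<union> Lo n else {})"
  have UpM: "Up n \<in> sets M" for n
    unfolding Up_def by (rule mixE.T_ge_sets[OF inst_up[OF marg]]) auto
  have LoM: "Lo n \<in> sets M" for n
    unfolding Lo_def by (rule mixE.T_ge_sets[OF inst_lo[OF marg]]) auto
  have AM: "A n \<in> sets M" for n unfolding A_def using UpM LoM by auto
  have Aprob: "prob (A n) \<le> 4 * inverse (real n ^ 2)" for n
  proof (cases "3 \<le> n")
    case True
    have u: "prob (Up n) \<le> 2 / (real n)\<^sup>2" unfolding Up_def c_def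
      by (rule mixE.tail_final[OF inst_up[OF marg] True])
    have l: "prob (Lo n) \<le> 2 / (real n)\<^sup>2" unfolding Lo_def c_def
      by (rule mixE.tail_final[OF inst_lo[OF marg] True])
    have "prob (A n) \<le> prob (Up n) + prob (Lo n)" unfolding A_def using True measure_Un_le[OF UpM LoM] by simp
    thus ?thesis using u l by (simp add: inverse_eq_divide)
  next
    case False thus ?thesis unfolding A_def by simp
  qed
  have summ: "summable (\<lambda>n. prob (A n))"
  proof (rule summable_comparison_test'[where N=0])
    show "summable (\<lambda>n. 4 * inverse (real n ^ 2))"
      by (intro summable_mult inverse_power_summable) simp
    fix n :: nat show "norm (prob (A n)) \<le> 4 * inverse (real n ^ 2)" using Aprob[of n] by simp
  qed
  have "AE \<omega> in M. eventually (\<lambda>n. \<omega> \<in> space M - A n) sequentially"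
    by (rule borel_cantelli_AE1[OF AM _ summ]) (simp add: emeasure_finite less_top[symmetric])
  thus ?thesis
  proof (rule AE_mp[OF _ AE_I2], intro impI)
    fix \<omega> assume w: "\<omega> \<in> space M" and ev: "eventually (\<lambda>n. \<omega> \<in> space M - A n) sequentially"
    show "eventually (\<lambda>n. \<bar>emp_df X n \<omega> (xs n) - F (xs n)\<bar> \<le> 2 * (Ac + 2) * sqrt (ln (real n) / real n)) sequentially"
      using ev eventually_ge_at_top[of 3]
    proof eventually_elim
      case (elim n)
      hence n3: "3 \<le> n" and nU: "\<omega> \<notin> Up n" and nL: "\<omega> \<notin> Lo n" unfolding A_def by auto
      let ?d = "real n * emp_df X n \<omega> (xs n) - real n * F (xs n)"
      have "?d < c n" using nU w T_up_eq[OF marg w] unfolding Up_def by auto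
      moreover have "- ?d < c n" using nL w T_lo_eq[OF marg w] unfolding Lo_def by auto
      ultimately have d: "\<bar>?d\<bar> < c n" by linarith
      have npos: "0 < real n" using n3 by simp
      have "\<bar>emp_df X n \<omega> (xs n) - F (xs n)\<bar> = \<bar>?d\<bar> / real n"
        using npos by (simp add: abs_mult right_diff_distrib[symmetric])
      also have "\<dots> \<le> c n / real n" using d npos by (simp add: divide_right_mono)
      also have "c n / real n = 2 * (Ac + 2) * sqrt (ln (real n) / real n)"
      proof -
        have "sqrt (real n * ln (real n)) / real n = sqrt (ln (real n) / real n)"
        proof -
          have "sqrt (real n * ln (real n)) / real n = sqrt (real n * ln (real n)) / sqrt ((real n)\<^sup>2)" using npos by simp
          also have "\<dots> = sqrt (real n * ln (real n) / (real n)\<^sup>2)" by (simp add: real_sqrt_divide)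
          also have "real n * ln (real n) / (real n)\<^sup>2 = ln (real n) / real n" using npos by (simp add: power2_eq_square)
          finally show ?thesis .
        qed
        moreover have "c n / real n = (2 * (Ac + 2)) * (sqrt (real n * ln (real n)) / real n)"
          by (simp only: c_def times_divide_eq_right mult.assoc)
        ultimately show ?thesis by simp
      qed
      finally show ?case .
    qed
  qed
qed

end



lemma emp_mono: "x \<le> y \<Longrightarrow> emp_df X n \<omega> x \<le> emp_df X n \<omega> y"
  unfolding emp_df_def by (intro divide_right_mono sum_mono) auto

lemma emp_bdd: assumes "0 < p" shows "bdd_below {x. p \<le> emp_df X n \<omega> x}"
proof (cases "n = 0")
  case True
  hence "{x. p \<le> emp_df X n \<omega> x} = {}" using assms by (auto simp: emp_df_def)
  thus ?thesis by simp
next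
  case False
  show ?thesis
  proof (rule bdd_belowI)
    fix x assume x: "x \<in> {x. p \<le> emp_df X n \<omega> x}"
    have "\<exists>i\<in>{1..n}. X i \<omega> \<le> x"
    proof (rule ccontr)
      assume "\<not> ?thesis"
      hence "emp_df X n \<omega> x = 0" unfolding emp_df_def by (auto intro!: sum.neutral)
      thus False using x assms by simp
    qed
    then obtain i where i: "i \<in> {1..n}" "X i \<omega> \<le> x" by blast
    have "Min ((\<lambda>i. X i \<omega>) ` {1..n}) \<le> X i \<omega>" using i by (intro Min_le) auto
    thus "Min ((\<lambda>i. X i \<omega>) ` {1..n}) \<le> x" using i by linarith
  qed
qed

theorem theorem2p5:
  fixes M :: "'a measure" and X :: "nat \<Rightarrow> 'a \<Rightarrow> real"
    and F f :: "real \<Rightarrow> real" and p :: real and N :: "real set"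
  assumes "prob_space M"
    and rv: "\<And>i. i \<ge> 1 \<Longrightarrow> X i \<in> borel_measurable M"
    and marg: "\<And>i x. i \<ge> 1 \<Longrightarrow> F x = measure M {\<omega> \<in> space M. X i \<omega> \<le> x}"
    and mixing: "decseq (\<lambda>n. mixing_phi M X n)" "(\<lambda>n. mixing_phi M X n) \<longlonglongrightarrow> 0"
    and summ: "summable (\<lambda>n. sqrt (mixing_phi M X (Suc n)))"
    and p: "0 < p" "p < 1"
    and N: "open N" "Inf {x. F x \<ge> p} \<in> N"
    and dens: "\<And>x. x \<in> N \<Longrightarrow> (F has_real_derivative f x) (at x)"
    and fpos: "\<And>x. x \<in> N \<Longrightarrow> f x > 0"
    and fcont: "continuous_on N f"
    and fbdd: "bdd_above (f ` N)"
    and deriv: "\<exists>U f' B. open U \<and> Inf {x. F x \<ge> p} \<in> U \<and>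
                  (\<forall>x\<in>U. (f has_real_derivative f' x) (at x) \<and> \<bar>f' x\<bar> \<le> B)"
  shows "AE \<omega> in M.
     (\<lambda>n. Inf {x. emp_df X n \<omega> x \<ge> p}
          - (Inf {x. F x \<ge> p} - (emp_df X n \<omega> (Inf {x. F x \<ge> p}) - p) / f (Inf {x. F x \<ge> p})))
     \<in> O(\<lambda>n. sqrt (ln (real n)) / sqrt (real n))"
proof -
  interpret mix M X
    using assms(1) rv mixing summ by (simp add: mix_def mix_axioms_def)
  define \<xi> where "\<xi> = Inf {x. F x \<ge> p}"
  define D where "D = distr M borel (X 1)"
  have X1: "random_variable borel (X 1)" using rv by simp
  interpret Dd: real_distribution D unfolding D_def using X1 by simp
  have Fc: "F = cdf D"
  proof
    fix x
    have "cdf D x = prob (X 1 -` {..x} \<inter> space M)" unfolding cdf_def D_def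
      by (subst measure_distr) (use X1 in auto)
    also have "X 1 -` {..x} \<inter> space M = {\<omega> \<in> space M. X 1 \<omega> \<le> x}" by auto
    finally show "F x = cdf D x" using marg[of 1 x] by simp
  qed
  have Fmono: "x \<le> y \<Longrightarrow> F x \<le> F y" for x y unfolding Fc by (rule Dd.cdf_nondecreasing)
  have "eventually (\<lambda>x. p < F x) at_top"
    using order_tendstoD(1)[OF Dd.cdf_lim_at_top_prob p(2)] unfolding Fc .
  then obtain N0 where N0: "\<forall>n\<ge>N0. p < F n" by (auto simp: eventually_at_top_linorder)
  hence x0: "p \<le> F N0" by (simp add: less_imp_le)
  have "eventually (\<lambda>x. F x < p) at_bot"
    using order_tendstoD(2)[OF Dd.cdf_lim_at_bot p(1)] unfolding Fc .
  then obtain b where b: "\<And>x. x \<le> b \<Longrightarrow> F x < p" by (auto simp: eventually_at_bot_linorder)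
  have ne: "{x. F x \<ge> p} \<noteq> {}" using x0 by auto
  have bdd: "bdd_below {x. F x \<ge> p}"
  proof (rule bdd_belowI[of _ b])
    fix x assume "x \<in> {x. F x \<ge> p}"
    thus "b \<le> x" using b[of x] by force
  qed
  have below: "F x < p" if "x < \<xi>" for x
  proof (rule ccontr)
    assume "\<not> F x < p"
    hence "\<xi> \<le> x" unfolding \<xi>_def by (intro cInf_lower bdd) auto
    thus False using that by simp
  qed
  have above: "p \<le> F x" if lt: "\<xi> < x" for x
  proof -
    obtain y where "y \<in> {x. F x \<ge> p}" "y < x" using lt cInf_less_iff[OF ne bdd] unfolding \<xi>_def by auto
    thus ?thesis using Fmono[of y x] by auto
  qed
  have \<xi>N: "\<xi> \<in> N" unfolding \<xi>_def by (rule N(2))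
  have der: "(F has_real_derivative f \<xi>) (at \<xi>)" by (rule dens[OF \<xi>N])
  have f0: "f \<xi> > 0" by (rule fpos[OF \<xi>N])
  have cont: "(F \<longlongrightarrow> F \<xi>) (at \<xi>)" using DERIV_isCont[OF der] by (simp add: isCont_def)
  have F\<xi>: "F \<xi> = p"
  proof (rule antisym)
    have "(F \<longlongrightarrow> F \<xi>) (at_left \<xi>)" using cont by (simp add: filterlim_at_split)
    moreover have "eventually (\<lambda>x. F x \<le> p) (at_left \<xi>)"
    proof -
      have ev: "eventually (\<lambda>x. x \<in> {\<xi> - 1<..<\<xi>}) (at_left \<xi>)" by (rule eventually_at_left_real) simp
      thus ?thesis by eventually_elim (auto intro: less_imp_le below)
    qed
    ultimately show "F \<xi> \<le> p" by (rule tendsto_upperbound) simp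
    have "(F \<longlongrightarrow> F \<xi>) (at_right \<xi>)" using cont by (simp add: filterlim_at_split)
    moreover have "eventually (\<lambda>x. p \<le> F x) (at_right \<xi>)"
      using eventually_at_right_less[of \<xi>] by eventually_elim (rule above)
    ultimately show "p \<le> F \<xi>" by (rule tendsto_lowerbound) simp
  qed
  define m where "m = f \<xi> / 2"
  have m0: "m > 0" unfolding m_def using f0 by simp
  have "((\<lambda>y. (F y - F \<xi>) / (y - \<xi>)) \<longlongrightarrow> f \<xi>) (at \<xi>)"
    using der by (simp add: has_field_derivative_iff)
  hence "eventually (\<lambda>y. dist ((F y - F \<xi>) / (y - \<xi>)) (f \<xi>) < m) (at \<xi>)"
    using m0 by (rule tendstoD)
  then obtain \<delta> where \<delta>: "\<delta> > 0"
    and \<delta>b: "\<And>y. y \<noteq> \<xi> \<Longrightarrow> dist y \<xi> < \<delta> \<Longrightarrow> dist ((F y - F \<xi>) / (y - \<xi>)) (f \<xi>) < m"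
    unfolding eventually_at by auto
  have linR: "p + m * t \<le> F (\<xi> + t)" if "0 < t" "t < \<delta>" for t
  proof -
    have "dist ((F (\<xi> + t) - F \<xi>) / t) (f \<xi>) < m" using \<delta>b[of "\<xi> + t"] that by (simp add: dist_real_def)
    hence "m < (F (\<xi> + t) - p) / t" unfolding F\<xi> m_def dist_real_def by linarith
    thus ?thesis using that by (simp add: less_divide_eq mult.commute)
  qed
  have linL: "F (\<xi> - t) \<le> p - m * t" if "0 < t" "t < \<delta>" for t
  proof -
    have "dist ((F (\<xi> - t) - F \<xi>) / (- t)) (f \<xi>) < m" using \<delta>b[of "\<xi> - t"] that by (simp add: dist_real_def)
    hence "m < (F (\<xi> - t) - p) / (- t)" unfolding F\<xi> m_def dist_real_def by linarith
    moreover have "(F (\<xi> - t) - p) / (- t) = (p - F (\<xi> - t)) / t" using that by (simp add: field_simps)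
    ultimately have "m < (p - F (\<xi> - t)) / t" by simp
    thus ?thesis using that by (simp add: less_divide_eq mult.commute)
  qed
  define K where "K = 2 * (Ac + 2)"
  have K0: "K > 0" unfolding K_def Ac_def using S_nonneg by simp
  define \<tau> where "\<tau> = (\<lambda>n::nat. sqrt (ln (real n) / real n))"
  define h where "h = (\<lambda>n. (2 * K / m) * \<tau> n)"
  have \<tau>0: "\<tau> \<longlonglongrightarrow> 0" unfolding \<tau>_def by real_asymp
  have h0: "h \<longlonglongrightarrow> 0" unfolding h_def using tendsto_mult_right_zero[OF \<tau>0] .
  have ev\<delta>: "eventually (\<lambda>n. h n < \<delta>) sequentially" using order_tendstoD(2)[OF h0 \<delta>] .
  have margp: "\<And>i x. i \<ge> 1 \<Longrightarrow> F x = prob {\<omega>\<in>space M. X i \<omega> \<le> x}" using marg by simp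
  define C where "C = 2 * K / m + K / f \<xi>"
  have k1: "AE \<omega> in M. eventually (\<lambda>n. \<bar>emp_df X n \<omega> \<xi> - F \<xi>\<bar> \<le> 2 * (Ac + 2) * sqrt (ln (real n) / real n)) sequentially"
    by (rule key) (rule margp)
  have k2: "AE \<omega> in M. eventually (\<lambda>n. \<bar>emp_df X n \<omega> (\<xi> + h n) - F (\<xi> + h n)\<bar> \<le> 2 * (Ac + 2) * sqrt (ln (real n) / real n)) sequentially"
    by (rule key) (rule margp)
  have k3: "AE \<omega> in M. eventually (\<lambda>n. \<bar>emp_df X n \<omega> (\<xi> - h n) - F (\<xi> - h n)\<bar> \<le> 2 * (Ac + 2) * sqrt (ln (real n) / real n)) sequentially"
    by (rule key) (rule margp)
  have "AE \<omega> in M. eventually (\<lambda>n. \<bar>Inf {x. emp_df X n \<omega> x \<ge> p} - (\<xi> - (emp_df X n \<omega> \<xi> - p) / f \<xi>)\<bar>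
           \<le> C * \<bar>sqrt (ln (real n)) / sqrt (real n)\<bar>) sequentially"
    using AE_conjI[OF k1 AE_conjI[OF k2 k3]]
  proof (rule AE_mp[OF _ AE_I2], intro impI)
    fix \<omega> assume w: "\<omega> \<in> space M" and E: "eventually (\<lambda>n. \<bar>emp_df X n \<omega> \<xi> - F \<xi>\<bar> \<le> 2 * (Ac + 2) * sqrt (ln (real n) / real n)) sequentially \<and>
      eventually (\<lambda>n. \<bar>emp_df X n \<omega> (\<xi> + h n) - F (\<xi> + h n)\<bar> \<le> 2 * (Ac + 2) * sqrt (ln (real n) / real n)) sequentially \<and>
      eventually (\<lambda>n. \<bar>emp_df X n \<omega> (\<xi> - h n) - F (\<xi> - h n)\<bar> \<le> 2 * (Ac + 2) * sqrt (ln (real n) / real n)) sequentially"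
    show "eventually (\<lambda>n. \<bar>Inf {x. emp_df X n \<omega> x \<ge> p} - (\<xi> - (emp_df X n \<omega> \<xi> - p) / f \<xi>)\<bar>
           \<le> C * \<bar>sqrt (ln (real n)) / sqrt (real n)\<bar>) sequentially"
      using E[THEN conjunct1] E[THEN conjunct2, THEN conjunct1] E[THEN conjunct2, THEN conjunct2] ev\<delta> eventually_ge_at_top[of 2]
    proof eventually_elim
      case (elim n)
      have n2: "2 \<le> n" and hlt: "h n < \<delta>" using elim by auto
      have \<tau>pos: "0 < \<tau> n" unfolding \<tau>_def using n2 by simp
      have hpos: "0 < h n" unfolding h_def using \<tau>pos K0 m0 by simp
      have mh: "m * h n = 2 * (K * \<tau> n)" unfolding h_def using m0 by (simp add: field_simps)
      have Kt: "K * \<tau> n = 2 * (Ac + 2) * sqrt (ln (real n) / real n)" unfolding K_def \<tau>_def ..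
      have e1: "\<bar>emp_df X n \<omega> \<xi> - p\<bar> \<le> K * \<tau> n" using elim(1) F\<xi> Kt by simp
      have e2: "\<bar>emp_df X n \<omega> (\<xi> + h n) - F (\<xi> + h n)\<bar> \<le> K * \<tau> n" using elim(2) Kt by simp
      have e3: "\<bar>emp_df X n \<omega> (\<xi> - h n) - F (\<xi> - h n)\<bar> \<le> K * \<tau> n" using elim(3) Kt by simp
      have Kt0: "0 \<le> K * \<tau> n" using K0 \<tau>pos by simp
      have R: "p + m * h n \<le> F (\<xi> + h n)" by (rule linR[OF hpos hlt])
      have L: "F (\<xi> - h n) \<le> p - m * h n" by (rule linL[OF hpos hlt])
      have inS: "\<xi> + h n \<in> {x. emp_df X n \<omega> x \<ge> p}" using R e2 mh Kt0 by auto
      have lowp: "emp_df X n \<omega> (\<xi> - h n) < p" using L e3 mh \<tau>pos K0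
      proof -
        have "0 < K * \<tau> n" using K0 \<tau>pos by simp
        thus ?thesis using L e3 mh by linarith
      qed
      have up: "Inf {x. emp_df X n \<omega> x \<ge> p} \<le> \<xi> + h n"
        by (rule cInf_lower[OF inS emp_bdd[OF p(1)]])
      have lo: "\<xi> - h n \<le> Inf {x. emp_df X n \<omega> x \<ge> p}"
      proof (rule cInf_greatest)
        show "{x. emp_df X n \<omega> x \<ge> p} \<noteq> {}" using inS by blast
        fix x assume x: "x \<in> {x. emp_df X n \<omega> x \<ge> p}"
        show "\<xi> - h n \<le> x"
        proof (rule ccontr)
          assume "\<not> \<xi> - h n \<le> x"
          hence "emp_df X n \<omega> x \<le> emp_df X n \<omega> (\<xi> - h n)" by (intro emp_mono) simp
          thus False using x lowp by simp
        qed
      qed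
      have q: "\<bar>(emp_df X n \<omega> \<xi> - p) / f \<xi>\<bar> \<le> K * \<tau> n / f \<xi>"
        using e1 f0 by (simp add: abs_divide divide_right_mono)
      have "\<bar>Inf {x. emp_df X n \<omega> x \<ge> p} - (\<xi> - (emp_df X n \<omega> \<xi> - p) / f \<xi>)\<bar>
          \<le> h n + K * \<tau> n / f \<xi>" using up lo q by linarith
      also have "\<dots> = C * \<tau> n" unfolding C_def h_def by (simp add: algebra_simps)
      also have "\<tau> n = \<bar>sqrt (ln (real n)) / sqrt (real n)\<bar>"
      proof -
        have "0 \<le> ln (real n)" using n2 by simp
        thus ?thesis unfolding \<tau>_def by (simp add: real_sqrt_divide)
      qed
      finally show ?case .
    qed
  qed
  thus ?thesis
  proof (rule AE_mp[OF _ AE_I2], intro impI)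
    fix \<omega> assume "eventually (\<lambda>n. \<bar>Inf {x. emp_df X n \<omega> x \<ge> p} - (\<xi> - (emp_df X n \<omega> \<xi> - p) / f \<xi>)\<bar>
           \<le> C * \<bar>sqrt (ln (real n)) / sqrt (real n)\<bar>) sequentially"
    hence "(\<lambda>n. Inf {x. emp_df X n \<omega> x \<ge> p} - (\<xi> - (emp_df X n \<omega> \<xi> - p) / f \<xi>))
        \<in> O(\<lambda>n. sqrt (ln (real n)) / sqrt (real n))" by (intro bigoI) simp
    thus "(\<lambda>n. Inf {x. emp_df X n \<omega> x \<ge> p}
          - (Inf {x. F x \<ge> p} - (emp_df X n \<omega> (Inf {x. F x \<ge> p}) - p) / f (Inf {x. F x \<ge> p})))
        \<in> O(\<lambda>n. sqrt (ln (real n)) / sqrt (real n))" unfolding \<xi>_def .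
  qed
qed

end
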